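(* Let $k\ge1$ be an integer. For the class of $k$-well-structured instances of one-sided matching (with unrestricted nonnegative valuations), the algorithm $k$-FMM makes $k$ value queries per agent and has distortion $O(k\cdot n^{1/k})$.
   Context: One-sided matching: there is a set $N$ of $n$ agents and a set $A$ of $n$ items. Each agent $i$ has a valuation function $v_i:A\to\mathbb{R}_{\ge0}$. Agents report strict rankings $\succ_i$ consistent with their values (if $a\succ_i b$ then $v_i(a)\ge v_i(b)$). Value queries return $v_i(j)$. A matching is a bijection $N\to A$ with welfare $\mathrm{SW}(Y\mid\mathbf v)=\sum_i v_i(y_i)$. The distortion of an algorithm on a class of instances is the supremum over instances in the class of optimal welfare divided by the welfare of the algorithm's output. $k$-well-structured ($k$-WS) instance: fix a constant $\varepsilon\in(0,1)$. The items are partitioned into $A_1,\dots,A_{k+1}$ with $|A_1|=1$ and $|A_\ell|=\varepsilon n^{(\ell-1)/k}$ for $\ell=2,\dots,k$ (assumed integers), and $A_{k+1}$ the remaining items. Every agent ranks all items of $A_\ell$ above all items of $A_{\ell+1}$ for each $\ell$. The order within each $A_\ell$ may differ across agents. The partition is known to the algorithm. Algorithm $k$-FMM: for each $\ell=1,\dots,k$ and each agent $i$, query $i$'s value $u_i(\ell)$ for her least-preferred item in $A_\ell$. Define $\tilde v_i(j)=u_i(\ell)$ for $j\in A_\ell$ with $\ell\le k$, and $\tilde v_i(j)=0$ for $j\in A_{k+1}$. Output a matching maximizing $\sum_i\tilde v_i(y_i)$. *)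

theory Defs
  imports Complex_Main
begin

text \<open>Agents and items are both represented by the index set {..<n}.
  A strict ranking of agent i is given by rk i :: nat => nat, injective on the items
  (smaller rank = more preferred).  The partition A_1,...,A_{k+1} is given by a level
  function lvl :: nat => nat with lvl j in {1..k+1}.\<close>

definition is_matching :: "nat \<Rightarrow> (nat \<Rightarrow> nat) \<Rightarrow> bool" where
  "is_matching n y \<longleftrightarrow> bij_betw y {..<n} {..<n}"

definition SW :: "(nat \<Rightarrow> nat \<Rightarrow> real) \<Rightarrow> nat \<Rightarrow> (nat \<Rightarrow> nat) \<Rightarrow> real" where
  "SW v n y = (\<Sum>i<n. v i (y i))"

definition consistent_rankings ::
  "nat \<Rightarrow> (nat \<Rightarrow> nat \<Rightarrow> real) \<Rightarrow> (nat \<Rightarrow> nat \<Rightarrow> nat) \<Rightarrow> bool" where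
  "consistent_rankings n v rk \<longleftrightarrow>
     (\<forall>i<n. inj_on (rk i) {..<n} \<and>
       (\<forall>a<n. \<forall>b<n. rk i a < rk i b \<longrightarrow> v i a \<ge> v i b))"

definition k_WS ::
  "real \<Rightarrow> nat \<Rightarrow> nat \<Rightarrow> (nat \<Rightarrow> nat \<Rightarrow> real) \<Rightarrow> (nat \<Rightarrow> nat \<Rightarrow> nat) \<Rightarrow> (nat \<Rightarrow> nat) \<Rightarrow> bool"
  where
  "k_WS eps k n v rk lvl \<longleftrightarrow>
     (\<forall>i<n. \<forall>j<n. v i j \<ge> 0) \<and>
     consistent_rankings n v rk \<and>
     (\<forall>j<n. 1 \<le> lvl j \<and> lvl j \<le> k + 1) \<and>
     card {j. j < n \<and> lvl j = 1} = 1 \<and>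
     (\<forall>l. 2 \<le> l \<and> l \<le> k \<longrightarrow>
        real (card {j. j < n \<and> lvl j = l}) = eps * real n powr ((real l - 1) / real k)) \<and>
     (\<forall>i<n. \<forall>a<n. \<forall>b<n. lvl a < lvl b \<longrightarrow> rk i a < rk i b)"

definition least_pref :: "nat \<Rightarrow> (nat \<Rightarrow> nat \<Rightarrow> nat) \<Rightarrow> (nat \<Rightarrow> nat) \<Rightarrow> nat \<Rightarrow> nat \<Rightarrow> nat" where
  "least_pref n rk lvl i l = (ARG_MAX (rk i) j. j < n \<and> lvl j = l)"

definition query_u :: "nat \<Rightarrow> (nat \<Rightarrow> nat \<Rightarrow> real) \<Rightarrow> (nat \<Rightarrow> nat \<Rightarrow> nat) \<Rightarrow> (nat \<Rightarrow> nat) \<Rightarrow> nat \<Rightarrow> nat \<Rightarrow> real" where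
  "query_u n v rk lvl i l = v i (least_pref n rk lvl i l)"

definition fmm_val :: "nat \<Rightarrow> nat \<Rightarrow> (nat \<Rightarrow> nat \<Rightarrow> real) \<Rightarrow> (nat \<Rightarrow> nat \<Rightarrow> nat) \<Rightarrow> (nat \<Rightarrow> nat) \<Rightarrow> nat \<Rightarrow> nat \<Rightarrow> real" where
  "fmm_val k n v rk lvl i j = (if lvl j \<le> k then query_u n v rk lvl i (lvl j) else 0)"

definition fmm_output :: "nat \<Rightarrow> nat \<Rightarrow> (nat \<Rightarrow> nat \<Rightarrow> real) \<Rightarrow> (nat \<Rightarrow> nat \<Rightarrow> nat) \<Rightarrow> (nat \<Rightarrow> nat) \<Rightarrow> (nat \<Rightarrow> nat) \<Rightarrow> bool" where
  "fmm_output k n v rk lvl y \<longleftrightarrow> is_matching n y \<and>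
     (\<forall>y'. is_matching n y' \<longrightarrow> SW (fmm_val k n v rk lvl) n y' \<le> SW (fmm_val k n v rk lvl) n y)"

end

theory Submission
  imports Defs
begin

lemma subset_large:
  fixes w :: "nat \<Rightarrow> real"
  assumes "finite S" "m \<le> card S" "\<forall>i\<in>S. w i \<ge> 0"
  shows "\<exists>T\<subseteq>S. card T = m \<and> real m * sum w S \<le> real (card S) * sum w T"
  using assms
proof (induction "card S - m" arbitrary: S)
  case 0
  then show ?case by (intro exI[of _ S]) auto
next
  case (Suc d)
  have "card S > 0" using Suc.hyps(2) by simp
  then have ne: "S \<noteq> {}" by auto
  obtain x where x: "x \<in> S" "w x = Min (w ` S)"
    using Min_in[of "w ` S"] Suc.prems ne by (metis empty_is_image finite_imageI imageE)
  have xmin: "\<forall>y\<in>S. w x \<le> w y" using x Suc.prems by simp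
  define S' where "S' = S - {x}"
  have cS': "card S' = card S - 1" using x Suc.prems S'_def by simp
  have "d = card S' - m" using Suc.hyps cS' by simp
  moreover have mle: "m \<le> card S'" using Suc.hyps(2) cS' by simp
  moreover have "finite S'" "\<forall>i\<in>S'. w i \<ge> 0" using Suc.prems S'_def by auto
  ultimately have "\<exists>T\<subseteq>S'. card T = m \<and> real m * sum w S' \<le> real (card S') * sum w T"
    using Suc.hyps(1)[of S'] by blast
  then obtain T where T: "T \<subseteq> S'" "card T = m" "real m * sum w S' \<le> real (card S') * sum w T"
    by blast
  have sumS: "sum w S = w x + sum w S'"
    using S'_def x Suc.prems by (simp add: sum.remove)
  have lb: "real (card S) * w x \<le> sum w S"
    using sum_bounded_below[of S "w x" w] xmin by simp
  have cpos: "card S \<ge> 1" using ne Suc.prems by (simp add: Suc_leI card_gt_0_iff)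
  have Tnn: "sum w T \<ge> 0" using T S'_def Suc.prems by (intro sum_nonneg) auto
  have S'nn: "sum w S' \<ge> 0" using S'_def Suc.prems by (intro sum_nonneg) auto
  have key: "real m * sum w S \<le> real (card S) * sum w T"
  proof (cases "card S = 1")
    case True
    then have "m = 0" using Suc.hyps(2) by simp
    then show ?thesis using Tnn by simp
  next
    case False
    define s where "s = real (card S)"
    have s1: "s > 1" using False cpos s_def by simp
    have cs': "real (card S') = s - 1" using cS' cpos s_def by simp
    have a: "(s - 1) * w x \<le> sum w S'" using lb sumS s_def by (simp add: algebra_simps)
    have "(s - 1) * (real m * sum w S) = real m * ((s-1) * w x) + real m * (s - 1) * sum w S'"
      using sumS by (simp add: algebra_simps)
    also have "\<dots> \<le> real m * sum w S' + real m * (s - 1) * sum w S'"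
      using a by (intro add_right_mono mult_left_mono) auto
    also have "\<dots> = s * (real m * sum w S')" by (simp add: algebra_simps)
    also have "\<dots> \<le> s * ((s - 1) * sum w T)" using T(3) cs' s1 by (intro mult_left_mono) auto
    finally have "(s - 1) * (real m * sum w S) \<le> (s - 1) * (s * sum w T)" by (simp add: algebra_simps)
    then show ?thesis using s1 s_def by simp
  qed
  show ?case using T key S'_def by (intro exI[of _ T]) auto
qed

lemma extend_bij:
  assumes "T \<subseteq> {..<n}" "B \<subseteq> {..<n}" "card T = card B"
  shows "\<exists>g. is_matching n g \<and> (\<forall>x\<in>T. g x \<in> B)"
proof -
  have fT: "finite T" "finite B" using assms finite_subset by auto
  obtain f where f: "bij_betw f T B" using finite_same_card_bij[OF fT] assms by auto
  have "card ({..<n} - T) = card ({..<n} - B)"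
    using assms fT by (simp add: card_Diff_subset)
  then obtain h where h: "bij_betw h ({..<n} - T) ({..<n} - B)"
    using finite_same_card_bij[of "{..<n} - T" "{..<n} - B"] by auto
  define g where "g = (\<lambda>x. if x \<in> T then f x else h x)"
  have g1: "bij_betw g T B" using f by (rule bij_betw_cong[THEN iffD1, rotated]) (simp add: g_def)
  have g2: "bij_betw g ({..<n} - T) ({..<n} - B)"
    using h by (rule bij_betw_cong[THEN iffD1, rotated]) (simp add: g_def)
  have "bij_betw g (T \<union> ({..<n} - T)) (B \<union> ({..<n} - B))"
    by (rule bij_betw_combine[OF g1 g2]) auto
  moreover have "T \<union> ({..<n} - T) = {..<n}" "B \<union> ({..<n} - B) = {..<n}" using assms by auto
  ultimately have "is_matching n g" by (simp add: is_matching_def)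
  moreover have "\<forall>x\<in>T. g x \<in> B" using g1 by (auto simp: bij_betw_def)
  ultimately show ?thesis by blast
qed

lemma main_bound:
  fixes eps :: real
  assumes eps: "0 < eps" "eps < 1" and k: "1 \<le> k" and ws: "k_WS eps k n v rk lvl"
    and fo: "fmm_output k n v rk lvl y" and Ym: "is_matching n Y"
  shows "eps * SW v n Y \<le> real (k+1) * real n powr (1 / real k) * SW v n y"
proof -
  have vnn: "\<And>i j. i<n \<Longrightarrow> j<n \<Longrightarrow> v i j \<ge> 0" using ws by (auto simp: k_WS_def)
  have inj: "\<And>i. i<n \<Longrightarrow> inj_on (rk i) {..<n}" using ws by (auto simp: k_WS_def consistent_rankings_def)
  have mono: "\<And>i a b. i<n \<Longrightarrow> a<n \<Longrightarrow> b<n \<Longrightarrow> rk i a < rk i b \<Longrightarrow> v i a \<ge> v i b"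
    using ws by (auto simp: k_WS_def consistent_rankings_def)
  have lvlr: "\<And>j. j<n \<Longrightarrow> 1 \<le> lvl j \<and> lvl j \<le> k+1" using ws by (auto simp: k_WS_def)
  define A where "A l = {j. j<n \<and> lvl j = l}" for l
  have A1: "card (A 1) = 1" using ws by (auto simp: k_WS_def A_def)
  have Acard: "\<And>l. 2 \<le> l \<Longrightarrow> l \<le> k \<Longrightarrow> real (card (A l)) = eps * real n powr ((real l - 1) / real k)"
    using ws unfolding k_WS_def A_def by blast
  have ord: "\<And>i a b. i<n \<Longrightarrow> a<n \<Longrightarrow> b<n \<Longrightarrow> lvl a < lvl b \<Longrightarrow> rk i a < rk i b"
    using ws unfolding k_WS_def by blast
  have Asub: "\<And>l. A l \<subseteq> {..<n}" by (auto simp: A_def)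
  have Afin: "\<And>l. finite (A l)" using Asub finite_subset by blast
  have npos: "n > 0"
  proof (rule ccontr)
    assume "\<not> n > 0" then have "A 1 = {}" by (auto simp: A_def)
    then show False using A1 by simp
  qed
  have n1: "real n \<ge> 1" using npos by simp
  have Ane: "\<And>l. 1 \<le> l \<Longrightarrow> l \<le> k \<Longrightarrow> A l \<noteq> {}"
  proof -
    fix l :: nat assume l: "1 \<le> l" "l \<le> k"
    show "A l \<noteq> {}"
    proof (cases "l = 1")
      case True then show ?thesis using A1 by auto
    next
      case False
      then have "real (card (A l)) > 0" using Acard[of l] l eps npos by simp
      then show ?thesis by auto
    qed
  qed
  define U where "U i l = query_u n v rk lvl i l" for i l
  define lp where "lp i l = least_pref n rk lvl i l" for i l
  have lpfacts: "lp i l \<in> A l \<and> (\<forall>j\<in>A l. rk i j \<le> rk i (lp i l))"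
    if l1: "1 \<le> l" and l2: "l \<le> k" for i l
  proof -
    obtain j0 where j0: "j0 \<in> A l" using Ane[OF l1 l2] by blast
    have b: "\<forall>j. (j<n \<and> lvl j = l) \<longrightarrow> rk i j < Suc (Max (rk i ` {..<n}))"
      by (auto simp: le_imp_less_Suc)
    show ?thesis
      using arg_max_nat_lemma[of "\<lambda>j. j<n \<and> lvl j = l" j0 "rk i" "Suc (Max (rk i ` {..<n}))"] j0 b
      unfolding lp_def least_pref_def A_def by auto
  qed
  have u_le: "U i l \<le> v i j" if "i<n" "j \<in> A l" "1 \<le> l" "l \<le> k" for i j l
  proof -
    have h: "lp i l \<in> A l" "rk i j \<le> rk i (lp i l)" using lpfacts[OF that(3,4)] that(2) by auto
    have jn: "j<n" "lp i l < n" using h(1) that(2) by (auto simp: A_def)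
    show ?thesis
    proof (cases "rk i j = rk i (lp i l)")
      case True
      then have "j = lp i l" using inj[OF that(1)] jn by (auto dest: inj_onD)
      then show ?thesis by (simp add: U_def query_u_def lp_def)
    next
      case False
      then have "rk i j < rk i (lp i l)" using h by simp
      then show ?thesis using mono[OF that(1) jn(1) jn(2)] by (simp add: U_def query_u_def lp_def)
    qed
  qed
  have u_ge: "v i j \<le> U i l" if "i<n" "j<n" "1 \<le> l" "l \<le> k" "l < lvl j" for i j l
  proof -
    have h: "lp i l \<in> A l" using lpfacts[OF that(3,4)] by auto
    then have "lp i l < n" "lvl (lp i l) = l" by (auto simp: A_def)
    then have "rk i (lp i l) < rk i j" using ord[OF that(1) _ that(2)] that(5) by auto
    then show ?thesis using mono[OF that(1) \<open>lp i l < n\<close> that(2)] by (simp add: U_def query_u_def lp_def)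
  qed
  have u_nn: "U i l \<ge> 0" if "i<n" "1 \<le> l" "l \<le> k" for i l
  proof -
    have "lp i l \<in> A l" using lpfacts[OF that(2,3)] by auto
    then show ?thesis using vnn[OF that(1)] by (auto simp: U_def query_u_def lp_def A_def)
  qed
  define fv where "fv = fmm_val k n v rk lvl"
  have fv_le: "fv i j \<le> v i j" if "i<n" "j<n" for i j
    using u_le[OF that(1), of j "lvl j"] lvlr[OF that(2)] vnn[OF that]
    by (auto simp: fv_def fmm_val_def U_def A_def that(2))
  have fv_nn: "fv i j \<ge> 0" if "i<n" "j<n" for i j
    using u_nn[OF that(1), of "lvl j"] lvlr[OF that(2)] by (auto simp: fv_def fmm_val_def U_def)
  have mrange: "g i < n" if "is_matching n g" "i < n" for g i
    using that by (auto simp: is_matching_def bij_betw_def)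
  define TV where "TV = SW fv n y"
  have ym: "is_matching n y" using fo by (simp add: fmm_output_def)
  have TVopt: "SW fv n g \<le> TV" if "is_matching n g" for g
    using fo that by (simp add: fmm_output_def fv_def TV_def)
  have SWnn: "SW fv n g \<ge> 0" if "is_matching n g" for g
    unfolding SW_def using fv_nn mrange[OF that] by (intro sum_nonneg) auto
  have TVnn: "TV \<ge> 0" using SWnn[OF ym] TV_def by simp
  have TVle: "TV \<le> SW v n y"
    unfolding TV_def SW_def using fv_le mrange[OF ym] by (intro sum_mono) auto
  define p where "p l = (if l = (1::nat) then 1 else l - 1)" for l
  have opt_le: "v i (Y i) \<le> U i (p (lvl (Y i)))" if "i<n" for i
  proof -
    have Yi: "Y i < n" using mrange[OF Ym that] .
    show ?thesis
    proof (cases "lvl (Y i) = 1")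
      case True
      then have "Y i \<in> A 1" using Yi by (simp add: A_def)
      moreover have "lp i 1 \<in> A 1" using lpfacts[where l=1 and i=i] k by auto
      ultimately have "lp i 1 = Y i" using A1 by (metis card_1_singletonE singletonD)
      then show ?thesis using True by (simp add: p_def U_def query_u_def lp_def)
    next
      case False
      have a: "1 \<le> lvl (Y i) - 1" "lvl (Y i) - 1 \<le> k" "lvl (Y i) - 1 < lvl (Y i)"
        using False lvlr[OF Yi] by auto
      show ?thesis using u_ge[OF that Yi a] False by (simp add: p_def)
    qed
  qed
  define G where "G l = {i. i \<in> {..<n} \<and> lvl (Y i) = l}" for l
  have rn: "real n powr (1 / real k) \<ge> 1" using n1 by (intro ge_one_powr_ge_zero) auto
  have group: "eps * (\<Sum>i\<in>G l. U i (p l)) \<le> real n powr (1 / real k) * TV"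
    if l: "l \<in> {1..k+1}" for l
  proof (cases "l = 1")
    case True
    have "(\<Sum>i\<in>G l. U i (p l)) = (\<Sum>i\<in>G l. fv i (Y i))"
      using True k by (intro sum.cong) (auto simp: G_def p_def fv_def fmm_val_def U_def)
    also have "\<dots> \<le> (\<Sum>i\<in>{..<n}. fv i (Y i))"
      using fv_nn mrange[OF Ym] by (intro sum_mono2) (auto simp: G_def)
    also have "\<dots> \<le> TV" using TVopt[OF Ym] by (simp add: SW_def lessThan_def)
    finally have X: "(\<Sum>i\<in>G l. U i (p l)) \<le> TV" .
    have Xnn: "(\<Sum>i\<in>G l. U i (p l)) \<ge> 0"
      using u_nn True k by (intro sum_nonneg) (auto simp: G_def p_def)
    have "eps * (\<Sum>i\<in>G l. U i (p l)) \<le> (\<Sum>i\<in>G l. U i (p l))" using Xnn eps by (intro mult_left_le_one_le) auto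
    also have "\<dots> \<le> TV" by (rule X)
    also have "\<dots> \<le> real n powr (1 / real k) * TV" using mult_right_mono[OF rn TVnn] by simp
    finally show ?thesis .
  next
    case False
    then have l2: "2 \<le> l" "l \<le> k+1" using l by auto
    have pl: "p l = l - 1" using False by (simp add: p_def)
    define w where "w i = U i (l - 1)" for i
    have wnn: "\<forall>i\<in>G l. w i \<ge> 0" using u_nn l2 by (auto simp: w_def G_def)
    have Gfin: "finite (G l)" by (simp add: G_def)
    have YG: "Y ` G l = A l"
    proof
      show "Y ` G l \<subseteq> A l" using mrange[OF Ym] by (auto simp: G_def A_def)
      show "A l \<subseteq> Y ` G l"
      proof
        fix j assume "j \<in> A l"
        then have "j \<in> Y ` {..<n}" "lvl j = l" using Ym by (auto simp: A_def is_matching_def bij_betw_def)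
        then show "j \<in> Y ` G l" by (auto simp: G_def)
      qed
    qed
    have "inj_on Y (G l)" using Ym by (auto simp: is_matching_def bij_betw_def G_def intro: inj_on_subset)
    then have cG: "card (G l) = card (A l)" using YG card_image by fastforce
    define s where "s = card (G l)"
    define mB where "mB = card (A (l - 1))"
    define m' where "m' = min mB s"
    obtain T where T: "T \<subseteq> G l" "card T = m'" "real m' * sum w (G l) \<le> real s * sum w T"
      using subset_large[OF Gfin _ wnn, of m'] by (auto simp: m'_def s_def)
    obtain B where B: "B \<subseteq> A (l - 1)" "card B = m'"
      using obtain_subset_with_card_n[of m' "A (l - 1)"] by (auto simp: m'_def mB_def)
    obtain g where g: "is_matching n g" "\<forall>x\<in>T. g x \<in> B"
    proof -
      have "T \<subseteq> {..<n}" using T(1) by (auto simp: G_def)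
      moreover have "B \<subseteq> {..<n}" using B(1) Asub by blast
      moreover have "card T = card B" using T B by simp
      ultimately show ?thesis using extend_bij[of T n B] that by blast
    qed
    have "sum w T = (\<Sum>i\<in>T. fv i (g i))"
    proof (rule sum.cong)
      fix i assume "i \<in> T"
      then have "g i \<in> A (l - 1)" using g B by auto
      then show "w i = fv i (g i)" using l2 by (auto simp: w_def fv_def fmm_val_def U_def A_def)
    qed simp
    also have "\<dots> \<le> (\<Sum>i\<in>{..<n}. fv i (g i))"
      using fv_nn mrange[OF g(1)] T(1) by (intro sum_mono2) (auto simp: G_def)
    also have "\<dots> \<le> TV" using TVopt[OF g(1)] by (simp add: SW_def)
    finally have Tle: "sum w T \<le> TV" .
    have sle: "real s \<le> real n powr ((real l - 1) / real k)"
    proof (cases "l \<le> k")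
      case True
      then have "real s = eps * real n powr ((real l - 1) / real k)" using Acard[OF l2(1)] cG s_def by simp
      also have "\<dots> \<le> real n powr ((real l - 1) / real k)" using eps by (intro mult_left_le_one_le) auto
      finally show ?thesis .
    next
      case False
      then have "l = k + 1" using l2 by simp
      then have e: "real n powr ((real l - 1) / real k) = real n" using k npos by simp
      have "s \<le> n" unfolding s_def G_def using card_mono[of "{..<n}" "{i. i \<in> {..<n} \<and> lvl (Y i) = l}"] by auto
      then show ?thesis using e by simp
    qed
    have mBge: "eps * real n powr ((real l - 2) / real k) \<le> real mB"
    proof (cases "l = 2")
      case True
      then show ?thesis using A1 eps by (simp add: mB_def)
    next
      case False
      then have "real mB = eps * real n powr ((real (l - 1) - 1) / real k)"
        using Acard[of "l - 1"] l2 by (simp add: mB_def)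
      also have "real (l - 1) - 1 = real l - 2" using l2 by simp
      finally show ?thesis by simp
    qed
    have split: "real n powr ((real l - 1) / real k) = real n powr ((real l - 2) / real k) * real n powr (1 / real k)"
      by (simp add: powr_add[symmetric] diff_divide_distrib add_divide_distrib)
    have es1: "eps * real s \<le> real mB * real n powr (1 / real k)"
    proof -
      have "eps * real s \<le> eps * (real n powr ((real l - 2) / real k) * real n powr (1 / real k))"
        using sle split eps by simp
      also have "\<dots> = (eps * real n powr ((real l - 2) / real k)) * real n powr (1 / real k)" by simp
      also have "\<dots> \<le> real mB * real n powr (1 / real k)" using mBge by (intro mult_right_mono) auto
      finally show ?thesis .
    qed
    have es2: "eps * real s \<le> real s * real n powr (1 / real k)"
      using eps rn by (metis less_eq_real_def mult.commute mult_left_mono of_nat_0_le_iff order_trans mult.right_neutral)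
    have es: "eps * real s \<le> real m' * real n powr (1 / real k)"
      using es1 es2 by (simp add: m'_def min_def)
    define W where "W = sum w (G l)"
    have Wnn: "W \<ge> 0" unfolding W_def using wnn by (intro sum_nonneg) auto
    have Wsum: "(\<Sum>i\<in>G l. U i (p l)) = W" by (simp add: W_def w_def pl)
    show ?thesis
    proof (cases "s = 0")
      case True
      then have "G l = {}" using Gfin s_def by simp
      then show ?thesis using Wsum TVnn rn W_def by simp
    next
      case False
      have "real s * (eps * W) = (eps * real s) * W" by simp
      also have "\<dots> \<le> (real m' * real n powr (1 / real k)) * W" using es Wnn by (rule mult_right_mono)
      also have "\<dots> = real n powr (1 / real k) * (real m' * W)" by simp
      also have "\<dots> \<le> real n powr (1 / real k) * (real s * sum w T)"
        using T(3) rn W_def by (intro mult_left_mono) auto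
      also have "\<dots> \<le> real n powr (1 / real k) * (real s * TV)"
        using Tle rn by (intro mult_left_mono) auto
      finally have "real s * (eps * W) \<le> real s * (real n powr (1 / real k) * TV)" by (simp add: algebra_simps)
      then show ?thesis using False Wsum by simp
    qed
  qed
  have "SW v n Y = (\<Sum>i\<in>{..<n}. v i (Y i))" by (simp add: SW_def)
  also have "\<dots> \<le> (\<Sum>i\<in>{..<n}. U i (p (lvl (Y i))))" using opt_le by (intro sum_mono) auto
  also have "\<dots> = (\<Sum>l\<in>{1..k+1}. \<Sum>i\<in>G l. U i (p (lvl (Y i))))"
    unfolding G_def using lvlr mrange[OF Ym]
    by (intro sum.group[symmetric]) auto
  also have "\<dots> = (\<Sum>l\<in>{1..k+1}. \<Sum>i\<in>G l. U i (p l))"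
    by (intro sum.cong) (auto simp: G_def)
  finally have S1: "SW v n Y \<le> (\<Sum>l\<in>{1..k+1}. \<Sum>i\<in>G l. U i (p l))" .
  have "eps * SW v n Y \<le> eps * (\<Sum>l\<in>{1..k+1}. \<Sum>i\<in>G l. U i (p l))" using S1 eps by simp
  also have "\<dots> = (\<Sum>l\<in>{1..k+1}. eps * (\<Sum>i\<in>G l. U i (p l)))" by (rule sum_distrib_left)
  also have "\<dots> \<le> (\<Sum>l\<in>{1..k+1}. real n powr (1 / real k) * TV)" using group by (intro sum_mono) auto
  also have "\<dots> = real (k+1) * real n powr (1 / real k) * TV" by simp
  also have "\<dots> \<le> real (k+1) * real n powr (1 / real k) * SW v n y"
    using TVle rn by (intro mult_left_mono) auto
  finally show ?thesis .
qed

theorem theorem3: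
  fixes eps :: real
  assumes "0 < eps" and "eps < 1"
  shows "\<exists>C>0. \<forall>k n v rk lvl y Y. 1 \<le> k \<longrightarrow> k_WS eps k n v rk lvl \<longrightarrow>
           fmm_output k n v rk lvl y \<longrightarrow> is_matching n Y \<longrightarrow>
           SW v n Y \<le> C * real k * real n powr (1 / real k) * SW v n y"
proof (intro exI[of _ "2 / eps"] conjI allI impI)
  show "2 / eps > 0" using assms by simp
  fix k n v rk lvl y Y
  assume k: "1 \<le> k" and ws: "k_WS eps k n v rk lvl" and fo: "fmm_output k n v rk lvl y"
    and Ym: "is_matching n Y"
  have b: "eps * SW v n Y \<le> real (k+1) * real n powr (1 / real k) * SW v n y"
    by (rule main_bound[OF assms k ws fo Ym])
  have nn: "SW v n y \<ge> 0"
    using ws fo unfolding SW_def k_WS_def fmm_output_def is_matching_def bij_betw_def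
    by (intro sum_nonneg) auto
  have pn: "real n powr (1 / real k) \<ge> 0" by simp
  have "real (k+1) \<le> 2 * real k" using k by simp
  then have "real (k+1) * real n powr (1 / real k) * SW v n y \<le> (2 * real k) * real n powr (1 / real k) * SW v n y"
    using pn nn by (intro mult_right_mono) auto
  then have "eps * SW v n Y \<le> eps * (2 / eps * real k * real n powr (1 / real k) * SW v n y)"
    using b assms by simp
  then show "SW v n Y \<le> 2 / eps * real k * real n powr (1 / real k) * SW v n y"
    using assms mult_le_cancel_left_pos by blast
qed

end
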